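(* Let $\rho>0$ and assume $\Gamma(0)<\Gamma(1)$ and $1+\rho\ln\mu(0)>0$. Then for every $\rho$-admissible scaling $n\mapsto L_n$, \[ \lim_{n\to\infty}\mathbb{E}[I_n(L_n)]=\begin{cases}\infty&\text{if } 1+\rho\ln\Gamma(0)<0,\\ 0&\text{if } 1+\rho\ln\Gamma(0)>0.\end{cases} \]
   Context: Homogeneous binary MAG model. Fix $\mu(0),\mu(1)\in(0,1)$ with $\mu(0)+\mu(1)=1$, and a symmetric $2\times2$ matrix $(q(a,b))$ with $q(0,1)=q(1,0)$ and $0<q(a,b)<1$. On a probability space, $\{A,A_\ell(u):\ell,u\ge1\}$ are i.i.d. $\{0,1\}$-valued with $\mathbb{P}[A=1]=\mu(1)$, independent of i.i.d. uniform$(0,1)$ variables $\{U(u,v):1\le u<v\}$, $U(v,u)=U(u,v)$. With $\mathbf A_L(u)=(A_1(u),\dots,A_L(u))$ and $Q_L(\mathbf a,\mathbf b)=\prod_{\ell=1}^Lq(a_\ell,b_\ell)$, the graph $\mathbb{M}(n;L)$ on $\{1,\dots,n\}$ has an edge between distinct $u,v$ iff $U(u,v)\le Q_L(\mathbf A_L(u),\mathbf A_L(v))$. $I_n(L)$ denotes the number of isolated nodes (nodes with no neighbor) in $\mathbb{M}(n;L)$. $\Gamma(a)=\mathbb{E}[q(a,A)]$. A scaling $n\mapsto L_n$ of positive integers is $\rho$-admissible if $L_n\sim\rho\ln n$. *)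

theory Defs
  imports "HOL-Probability.Probability" "HOL-Library.Landau_Symbols"
begin

definition attr_pmf :: "real \<Rightarrow> nat pmf" where
  "attr_pmf mu1 = map_pmf (\<lambda>b. if b then 1 else 0) (bernoulli_pmf mu1)"

definition QL :: "(nat \<Rightarrow> nat \<Rightarrow> real) \<Rightarrow> nat \<Rightarrow> (nat \<Rightarrow> nat) \<Rightarrow> (nat \<Rightarrow> nat) \<Rightarrow> real" where
  "QL q L a b = (\<Prod>l\<in>{1..L}. q (a l) (b l))"

definition Gamma_MAG :: "real \<Rightarrow> real \<Rightarrow> (nat \<Rightarrow> nat \<Rightarrow> real) \<Rightarrow> nat \<Rightarrow> real" where
  "Gamma_MAG mu0 mu1 q a = mu0 * q a 0 + mu1 * q a 1"

text \<open>Probability space for M(n;L): attributes A_l(u) (u in 1..n, l in 1..L), i.i.d.,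
  independent of i.i.d. uniform(0,1) variables U(u,v), 1 <= u < v <= n.\<close>
definition MAG_space :: "real \<Rightarrow> nat \<Rightarrow> nat \<Rightarrow> ((nat \<times> nat \<Rightarrow> nat) \<times> (nat \<times> nat \<Rightarrow> real)) measure" where
  "MAG_space mu1 n L =
     pair_measure
       (PiM ({1..n} \<times> {1..L}) (\<lambda>_. measure_pmf (attr_pmf mu1)))
       (PiM {(u, v). 1 \<le> u \<and> u < v \<and> v \<le> n} (\<lambda>_. uniform_measure lborel {0<..<1}))"

definition MAG_adj :: "(nat \<Rightarrow> nat \<Rightarrow> real) \<Rightarrow> nat \<Rightarrow> (nat \<times> nat \<Rightarrow> nat) \<times> (nat \<times> nat \<Rightarrow> real) \<Rightarrow> nat \<Rightarrow> nat \<Rightarrow> bool" where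
  "MAG_adj q L \<omega> u v =
     (u \<noteq> v \<and> snd \<omega> (min u v, max u v) \<le> QL q L (\<lambda>l. fst \<omega> (u, l)) (\<lambda>l. fst \<omega> (v, l)))"

definition isolated_count :: "(nat \<Rightarrow> nat \<Rightarrow> real) \<Rightarrow> nat \<Rightarrow> nat \<Rightarrow> (nat \<times> nat \<Rightarrow> nat) \<times> (nat \<times> nat \<Rightarrow> real) \<Rightarrow> nat" where
  "isolated_count q n L \<omega> = card {u \<in> {1..n}. \<forall>v \<in> {1..n}. \<not> MAG_adj q L \<omega> u v}"

definition expected_isolated :: "real \<Rightarrow> (nat \<Rightarrow> nat \<Rightarrow> real) \<Rightarrow> nat \<Rightarrow> nat \<Rightarrow> real" where
  "expected_isolated mu1 q n L =
     integral\<^sup>L (MAG_space mu1 n L) (\<lambda>\<omega>. real (isolated_count q n L \<omega>))"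

definition admissible :: "real \<Rightarrow> (nat \<Rightarrow> nat) \<Rightarrow> bool" where
  "admissible \<rho> L \<longleftrightarrow> (\<forall>n. L n \<ge> 1) \<and> (\<lambda>n. real (L n)) \<sim>[at_top] (\<lambda>n. \<rho> * ln (real n))"

end

theory Submission
  imports Defs "HOL-Real_Asymp.Real_Asymp"
begin

lemma prod_sf_of_prob:
  assumes "\<And>i. prob_space (M i)"
  shows "product_sigma_finite M"
  unfolding product_sigma_finite_def using assms prob_space_imp_sigma_finite by blast

lemma prod_integral_coords:
  fixes g :: "'v \<Rightarrow> 'a \<Rightarrow> real"
  assumes P: "\<And>i. prob_space (M i)"
    and fin: "finite I" and inj: "inj_on p S" and sub: "p ` S \<subseteq> I"
    and int: "\<And>v. v \<in> S \<Longrightarrow> integrable (M (p v)) (g v)"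
  shows "(\<integral>x. (\<Prod>v\<in>S. g v (x (p v))) \<partial>PiM I M) = (\<Prod>v\<in>S. \<integral>y. g v y \<partial>M (p v))"
proof -
  interpret product_sigma_finite M using prod_sf_of_prob[OF P] .
  have finS: "finite S" using inj sub fin finite_imageD finite_subset by metis
  define f where "f i = (if i \<in> p ` S then g (the_inv_into S p i) else (\<lambda>_. 1))" for i
  have e1: "(\<Prod>v\<in>S. g v (x (p v))) = (\<Prod>i\<in>I. f i (x i))" for x
  proof -
    have "(\<Prod>v\<in>S. g v (x (p v))) = (\<Prod>i\<in>p ` S. f i (x i))"
      by (subst prod.reindex[OF inj]) (auto simp: f_def the_inv_into_f_f[OF inj])
    also have "\<dots> = (\<Prod>i\<in>I. f i (x i))"
      by (rule prod.mono_neutral_left) (use fin sub in \<open>auto simp: f_def\<close>)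
    finally show ?thesis .
  qed
  have intf: "integrable (M i) (f i)" if "i \<in> I" for i
  proof (cases "i \<in> p ` S")
    case True
    then obtain v where "v \<in> S" "i = p v" by auto
    then show ?thesis using int by (auto simp: f_def the_inv_into_f_f[OF inj])
  next
    case False
    interpret prob_space "M i" by (rule P)
    show ?thesis using False by (simp add: f_def)
  qed
  have h1: "(\<integral>x. (\<Prod>v\<in>S. g v (x (p v))) \<partial>PiM I M) = (\<Prod>i\<in>I. integral\<^sup>L (M i) (f i))"
    unfolding e1 by (rule product_integral_prod[OF fin intf])
  have one: "integral\<^sup>L (M i) (f i) = 1" if "i \<notin> p ` S" for i
  proof -
    interpret prob_space "M i" by (rule P)
    show ?thesis using that by (simp add: f_def prob_space)
  qed
  have h2: "(\<Prod>i\<in>I. integral\<^sup>L (M i) (f i)) = (\<Prod>i\<in>p ` S. integral\<^sup>L (M i) (f i))"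
    by (rule prod.mono_neutral_right) (use fin sub one in auto)
  have h3: "(\<Prod>i\<in>p ` S. integral\<^sup>L (M i) (f i)) = (\<Prod>v\<in>S. \<integral>y. g v y \<partial>M (p v))"
    by (subst prod.reindex[OF inj]) (auto simp: f_def the_inv_into_f_f[OF inj])
  show ?thesis using h1 h2 h3 by simp
qed

lemma coord_indep:
  assumes P: "\<And>i. prob_space (M i)" and fin: "finite I"
  shows "prob_space.indep_vars (PiM I M) M (\<lambda>i x. x i) I"
proof -
  interpret PS: prob_space "PiM I M" by (rule prob_space_PiM) (use P in auto)
  show ?thesis
  proof (cases "I = {}")
    case True
    show ?thesis
      unfolding PS.indep_vars_def PS.indep_sets_def using True by auto
  next
    case False
    show ?thesis
    proof (subst PS.indep_vars_iff_distr_eq_PiM'[OF False])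
      show "(\<lambda>x. x i) \<in> measurable (PiM I M) (M i)" if "i \<in> I" for i
        using that by (rule measurable_component_singleton)
      have "distr (PiM I M) (PiM I M) (\<lambda>x. restrict x I) = distr (PiM I M) (PiM I M) (\<lambda>x. x)"
        by (rule distr_cong) (auto simp: space_PiM)
      also have "\<dots> = PiM I M" by simp
      also have "\<dots> = PiM I (\<lambda>i. distr (PiM I M) (M i) (\<lambda>x. x i))"
        by (rule PiM_cong) (auto simp: distr_PiM_component P)
      finally show "distr (PiM I M) (PiM I M) (\<lambda>x. \<lambda>i\<in>I. x i) = PiM I (\<lambda>i. distr (PiM I M) (M i) (\<lambda>x. x i))"
        by simp
    qed
  qed
qed

lemma block_integral:
  fixes g :: "'j \<Rightarrow> ('i \<Rightarrow> 'a) \<Rightarrow> real"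
  assumes P: "\<And>i. prob_space (M i)" and fin: "finite I" and finS: "finite S"
    and K: "\<And>j. j \<in> S \<Longrightarrow> K j \<subseteq> I" and disj: "disjoint_family_on K S"
    and meas: "\<And>j. j \<in> S \<Longrightarrow> g j \<in> borel_measurable (PiM (K j) M)"
    and bnd: "\<And>j y. j \<in> S \<Longrightarrow> \<bar>g j y\<bar> \<le> B"
  shows "(\<integral>x. (\<Prod>j\<in>S. g j (restrict x (K j))) \<partial>PiM I M) = (\<Prod>j\<in>S. \<integral>x. g j (restrict x (K j)) \<partial>PiM I M)"
proof -
  interpret PS: prob_space "PiM I M" by (rule prob_space_PiM) (use P in auto)
  have "PS.indep_vars (\<lambda>j. PiM (K j) M) (\<lambda>j \<omega>. restrict (\<lambda>i. \<omega> i) (K j)) S"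
    by (rule PS.indep_vars_restrict[OF coord_indep[OF P fin] K disj])
  then have ind: "PS.indep_vars (\<lambda>_. borel) (\<lambda>j \<omega>. g j (restrict \<omega> (K j))) S"
    using PS.indep_vars_compose2[where Y=g and N="\<lambda>_. borel"] meas by auto
  have mj: "(\<lambda>x. g j (restrict x (K j))) \<in> borel_measurable (PiM I M)" if "j \<in> S" for j
    using measurable_compose[OF measurable_restrict_subset[OF K[OF that]] meas[OF that]] by simp
  have intj: "integrable (PiM I M) (\<lambda>x. g j (restrict x (K j)))" if "j \<in> S" for j
    by (rule PS.integrable_const_bound[where B=B]) (use bnd that mj in auto)
  show ?thesis
    by (rule PS.indep_vars_lebesgue_integral[OF finS ind intj])
qed

abbreviation "AM mu1 \<equiv> measure_pmf (attr_pmf mu1)"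
abbreviation "UM \<equiv> uniform_measure lborel {0<..<1::real}"
abbreviation "PS n \<equiv> {(u, v). 1 \<le> u \<and> u < v \<and> v \<le> (n::nat)}"

lemma meas_attr_coord:
  assumes "i \<in> {1..n} \<times> {1..L}"
  shows "(\<lambda>\<omega>. fst \<omega> i) \<in> measurable (MAG_space mu1 n L) (count_space UNIV)"
proof -
  have "(\<lambda>\<omega>. fst \<omega> i) \<in> measurable (MAG_space mu1 n L) (AM mu1)"
    unfolding MAG_space_def
    by (rule measurable_compose[OF measurable_fst measurable_component_singleton[OF assms]])
  moreover have "measurable (MAG_space mu1 n L) (AM mu1) = measurable (MAG_space mu1 n L) (count_space UNIV)"
    by (rule measurable_cong_sets) auto
  ultimately show ?thesis by simp
qed

lemma meas_unif_coord:
  assumes "p \<in> PS n"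
  shows "(\<lambda>\<omega>. snd \<omega> p) \<in> borel_measurable (MAG_space mu1 n L)"
proof -
  have "(\<lambda>\<omega>. snd \<omega> p) \<in> measurable (MAG_space mu1 n L) UM"
    unfolding MAG_space_def
    by (rule measurable_compose[OF measurable_snd measurable_component_singleton[OF assms]])
  moreover have "measurable (MAG_space mu1 n L) UM = measurable (MAG_space mu1 n L) borel"
    by (rule measurable_cong_sets) auto
  ultimately show ?thesis by simp
qed

lemma meas_QL:
  assumes "u \<in> {1..n}" "v \<in> {1..n}"
  shows "(\<lambda>\<omega>. QL q L (\<lambda>l. fst \<omega> (u, l)) (\<lambda>l. fst \<omega> (v, l))) \<in> borel_measurable (MAG_space mu1 n L)"
  unfolding QL_def
proof (rule borel_measurable_prod)
  fix l assume l: "l \<in> {1..L}"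
  have mu: "(\<lambda>\<omega>. fst \<omega> (u, l)) \<in> measurable (MAG_space mu1 n L) (count_space UNIV)"
    by (rule meas_attr_coord) (use assms l in auto)
  have mv: "(\<lambda>\<omega>. fst \<omega> (v, l)) \<in> measurable (MAG_space mu1 n L) (count_space UNIV)"
    by (rule meas_attr_coord) (use assms l in auto)
  show "(\<lambda>\<omega>. q (fst \<omega> (u, l)) (fst \<omega> (v, l))) \<in> borel_measurable (MAG_space mu1 n L)"
  proof (rule measurable_compose_countable'[where f="\<lambda>x \<omega>. q x (fst \<omega> (v, l))" and g="\<lambda>\<omega>. fst \<omega> (u, l)" and I=UNIV])
    fix i :: nat
    show "(\<lambda>\<omega>. q i (fst \<omega> (v, l))) \<in> borel_measurable (MAG_space mu1 n L)"
      by (rule measurable_compose_countable'[where f="\<lambda>x \<omega>. q i x" and g="\<lambda>\<omega>. fst \<omega> (v, l)" and I=UNIV, OF _ mv]) auto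
  qed (use mu in auto)
qed

lemma meas_adj:
  assumes "u \<in> {1..n}" "v \<in> {1..n}"
  shows "{\<omega> \<in> space (MAG_space mu1 n L). MAG_adj q L \<omega> u v} \<in> sets (MAG_space mu1 n L)"
proof (cases "u = v")
  case True
  then show ?thesis by (simp add: MAG_adj_def)
next
  case False
  have p: "(min u v, max u v) \<in> PS n" using assms False by auto
  have "{\<omega> \<in> space (MAG_space mu1 n L). MAG_adj q L \<omega> u v} =
    {\<omega> \<in> space (MAG_space mu1 n L). snd \<omega> (min u v, max u v) \<le> QL q L (\<lambda>l. fst \<omega> (u, l)) (\<lambda>l. fst \<omega> (v, l))}"
    using False by (auto simp: MAG_adj_def)
  also have "\<dots> \<in> sets (MAG_space mu1 n L)"
    by (rule borel_measurable_le[OF meas_unif_coord[OF p] meas_QL[OF assms]])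
  finally show ?thesis .
qed

definition iso_set where
  "iso_set q n L mu1 u = {\<omega> \<in> space (MAG_space mu1 n L). \<forall>v\<in>{1..n}. \<not> MAG_adj q L \<omega> u v}"

lemma meas_iso:
  assumes "u \<in> {1..n}"
  shows "iso_set q n L mu1 u \<in> sets (MAG_space mu1 n L)"
proof -
  have "iso_set q n L mu1 u = space (MAG_space mu1 n L) - (\<Union>v\<in>{1..n}. {\<omega> \<in> space (MAG_space mu1 n L). MAG_adj q L \<omega> u v})"
    by (auto simp: iso_set_def)
  also have "\<dots> \<in> sets (MAG_space mu1 n L)"
    using meas_adj assms by (intro sets.Diff sets.top sets.finite_UN) auto
  finally show ?thesis .
qed

lemma UM_prob: "prob_space UM"
  by (rule prob_space_uniform_measure) auto

lemma AM_prob: "prob_space (AM mu1)"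
  by (rule measure_pmf.prob_space_axioms)

lemma MAG_prob: "prob_space (MAG_space mu1 n L)"
  unfolding MAG_space_def
  by (intro prob_space_pair prob_space_PiM AM_prob UM_prob)

lemma E_sum:
  "expected_isolated mu1 q n L = (\<Sum>u\<in>{1..n}. measure (MAG_space mu1 n L) (iso_set q n L mu1 u))"
proof -
  interpret P: prob_space "MAG_space mu1 n L" by (rule MAG_prob)
  have "expected_isolated mu1 q n L = (\<integral>\<omega>. (\<Sum>u\<in>{1..n}. indicator (iso_set q n L mu1 u) \<omega>) \<partial>MAG_space mu1 n L)"
    unfolding expected_isolated_def
  proof (rule Bochner_Integration.integral_cong[OF refl])
    fix \<omega> assume \<omega>: "\<omega> \<in> space (MAG_space mu1 n L)"
    have "real (isolated_count q n L \<omega>) = real (\<Sum>u\<in>{1..n}. if (\<forall>v\<in>{1..n}. \<not> MAG_adj q L \<omega> u v) then 1 else 0)"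
    proof -
      have "(\<Sum>u\<in>{1..n}. if (\<forall>v\<in>{1..n}. \<not> MAG_adj q L \<omega> u v) then 1 else 0) = (\<Sum>u\<in>{u\<in>{1..n}. \<forall>v\<in>{1..n}. \<not> MAG_adj q L \<omega> u v}. 1::nat)"
        by (rule sum.inter_filter[symmetric]) simp
      then show ?thesis unfolding isolated_count_def card_eq_sum by (simp only:)
    qed
    also have "\<dots> = (\<Sum>u\<in>{1..n}. indicator (iso_set q n L mu1 u) \<omega>)"
      unfolding of_nat_sum by (rule sum.cong[OF refl]) (use \<omega> in \<open>simp add: iso_set_def indicator_def\<close>)
    finally show "real (isolated_count q n L \<omega>) = (\<Sum>u\<in>{1..n}. indicator (iso_set q n L mu1 u) \<omega>)" .
  qed
  also have "\<dots> = (\<Sum>u\<in>{1..n}. \<integral>\<omega>. indicator (iso_set q n L mu1 u) \<omega> \<partial>MAG_space mu1 n L)"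
    by (rule Bochner_Integration.integral_sum) (auto intro!: P.integrable_const_bound[where B=1] borel_measurable_indicator meas_iso)
  also have "\<dots> = (\<Sum>u\<in>{1..n}. measure (MAG_space mu1 n L) (iso_set q n L mu1 u))"
    by (intro sum.cong refl) (auto simp: iso_set_def Int_absorb2 intro!: arg_cong2[where f=measure])
  finally show ?thesis .
qed

definition phi :: "real \<Rightarrow> real" where "phi t = measure UM {t<..}"

lemma prod_if01:
  assumes "finite S"
  shows "(\<Prod>v\<in>S. if P v then 1 else (0::real)) = (if \<forall>v\<in>S. P v then 1 else 0)"
  using assms by (induct S rule: finite_induct) auto

lemma iso_fubini:
  assumes u: "u \<in> {1..n}"
  shows "measure (MAG_space mu1 n L) (iso_set q n L mu1 u) =
    (\<integral>a. (\<Prod>v\<in>{1..n}-{u}. phi (QL q L (\<lambda>l. a (u,l)) (\<lambda>l. a (v,l)))) \<partial>PiM ({1..n}\<times>{1..L}) (\<lambda>_. AM mu1))"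
proof -
  define M1 where "M1 = PiM ({1..n}\<times>{1..L}) (\<lambda>_. AM mu1)"
  define M2 where "M2 = PiM (PS n) (\<lambda>_. UM)"
  have MAG: "MAG_space mu1 n L = M1 \<Otimes>\<^sub>M M2" unfolding MAG_space_def M1_def M2_def ..
  have p1: "prob_space M1" unfolding M1_def by (intro prob_space_PiM AM_prob)
  have p2: "prob_space M2" unfolding M2_def by (intro prob_space_PiM UM_prob)
  interpret pair_prob_space M1 M2
    by (simp add: pair_prob_space_def pair_sigma_finite_def p1 p2 prob_space_imp_sigma_finite)
  interpret PM: prob_space "MAG_space mu1 n L" by (rule MAG_prob)
  let ?A = "iso_set q n L mu1 u"
  have Ameas: "?A \<in> sets (M1 \<Otimes>\<^sub>M M2)" using meas_iso[OF u, of q L mu1] MAG by simp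
  have "measure (MAG_space mu1 n L) ?A = (\<integral>\<omega>. indicator ?A \<omega> \<partial>(M1 \<Otimes>\<^sub>M M2))"
    using sets.sets_into_space[OF Ameas] MAG by (simp add: Int_absorb2)
  also have "\<dots> = (\<integral>a. (\<integral>U. indicator ?A (a, U) \<partial>M2) \<partial>M1)"
  proof (rule integral_fst'[symmetric])
    show "integrable (M1 \<Otimes>\<^sub>M M2) (indicator ?A :: _ \<Rightarrow> real)"
      using Ameas by (intro P.integrable_const_bound[where B=1] borel_measurable_indicator) auto
  qed
  also have "\<dots> = (\<integral>a. (\<Prod>v\<in>{1..n}-{u}. phi (QL q L (\<lambda>l. a (u,l)) (\<lambda>l. a (v,l)))) \<partial>M1)"
  proof (rule Bochner_Integration.integral_cong[OF refl])
    fix a assume a: "a \<in> space M1"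
    define c where "c v = QL q L (\<lambda>l. a (u,l)) (\<lambda>l. a (v,l))" for v
    define p where "p v = (min u v, max u v)" for v
    have "(\<integral>U. indicator ?A (a, U) \<partial>M2) = (\<integral>U. (\<Prod>v\<in>{1..n}-{u}. indicator {c v<..} (U (p v)) :: real) \<partial>M2)"
    proof (rule Bochner_Integration.integral_cong[OF refl])
      fix U assume U: "U \<in> space M2"
      have sp: "(a, U) \<in> space (MAG_space mu1 n L)" using a U MAG by (simp add: space_pair_measure)
      have "indicator ?A (a, U) = (if \<forall>v\<in>{1..n}-{u}. c v < U (p v) then 1 else (0::real))"
        using sp by (auto simp: iso_set_def indicator_def MAG_adj_def c_def p_def not_le)
      also have "\<dots> = (\<Prod>v\<in>{1..n}-{u}. if c v < U (p v) then 1 else 0)"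
        by (rule prod_if01[symmetric]) simp
      also have "\<dots> = (\<Prod>v\<in>{1..n}-{u}. indicator {c v<..} (U (p v)))"
        by (rule prod.cong) (auto simp: indicator_def)
      finally show "indicator ?A (a, U) = (\<Prod>v\<in>{1..n}-{u}. indicator {c v<..} (U (p v)) :: real)" .
    qed
    also have "\<dots> = (\<Prod>v\<in>{1..n}-{u}. \<integral>t. indicator {c v<..} t \<partial>UM)"
      unfolding M2_def
    proof (rule prod_integral_coords[where M="\<lambda>_. UM" and g="\<lambda>v. indicator {c v<..}" and p=p and I="PS n", OF UM_prob])
      show "finite (PS n)" by (rule finite_subset[of _ "{1..n}\<times>{1..n}"]) auto
      show "inj_on p ({1..n} - {u})" by (auto simp: inj_on_def p_def min_def max_def split: if_splits)
      show "p ` ({1..n} - {u}) \<subseteq> PS n" using u by (auto simp: p_def min_def max_def)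
      fix v
      interpret prob_space UM by (rule UM_prob)
      show "integrable UM (indicat_real {c v<..})"
        by (intro integrable_const_bound[where B=1]) auto
    qed
    also have "\<dots> = (\<Prod>v\<in>{1..n}-{u}. phi (c v))"
      by (simp add: phi_def)
    finally show "(\<integral>U. indicator ?A (a, U) \<partial>M2) = (\<Prod>v\<in>{1..n}-{u}. phi (QL q L (\<lambda>l. a (u,l)) (\<lambda>l. a (v,l))))"
      by (simp add: c_def)
  qed
  finally show ?thesis unfolding M1_def .
qed

lemma phi_eq: "phi t = max 0 (min 1 (1 - t))"
proof -
  have "phi t = measure lborel ({0<..<1} \<inter> {t<..}) / measure lborel {0<..<(1::real)}"
    unfolding phi_def by (subst measure_uniform_measure) auto
  also have "\<dots> = measure lborel ({0<..<1} \<inter> {t<..})" by simp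
  also have "\<dots> = max 0 (min 1 (1 - t))"
  proof (cases "t < 0")
    case True
    then have "{0<..<1} \<inter> {t<..} = {0<..<(1::real)}" by auto
    then show ?thesis using True by simp
  next
    case False
    show ?thesis
    proof (cases "t < 1")
      case True
      then have "{0<..<1} \<inter> {t<..} = {t<..<(1::real)}" using False by auto
      then show ?thesis using True False by simp
    next
      case F2: False
      then have "{0<..<1} \<inter> {t<..} = ({}::real set)" by auto
      then show ?thesis using F2 by simp
    qed
  qed
  finally show ?thesis .
qed

lemma meas_phi: "phi \<in> borel_measurable borel"
  unfolding phi_eq[abs_def] by measurable

lemma phi_bound: "\<bar>phi t\<bar> \<le> 1"
  unfolding phi_eq by auto

lemma AM_integral:
  assumes "0 \<le> mu1" "mu1 \<le> 1"
  shows "(\<integral>y. f y \<partial>AM mu1) = (1 - mu1) * f 0 + mu1 * (f 1 :: real)"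
  using assms unfolding attr_pmf_def by (simp add: algebra_simps)

lemma set_AM: "set_pmf (attr_pmf mu1) \<subseteq> {0, 1}"
  unfolding attr_pmf_def by auto

lemma AM_integrable: "integrable (AM mu1) (f :: nat \<Rightarrow> real)"
  by (rule integrable_measure_pmf_finite) (rule finite_subset[OF set_AM], simp)

lemma AE_valid:
  assumes "finite I"
  shows "AE a in PiM I (\<lambda>_. AM mu1). \<forall>i\<in>I. a i \<in> {0, 1}"
proof (rule AE_finite_allI[OF assms])
  fix i assume "i \<in> I"
  show "AE a in PiM I (\<lambda>_. AM mu1). a i \<in> {0, 1}"
    by (rule AE_PiM_component[where P="\<lambda>y. y \<in> {0,1}"]) (use \<open>i \<in> I\<close> set_AM AM_prob in \<open>auto intro!: AE_pmfI\<close>)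
qed

lemma meas_coord:
  assumes "i \<in> K"
  shows "(\<lambda>y. h (y i) :: real) \<in> borel_measurable (PiM K (\<lambda>_. AM mu1))"
proof -
  have "(\<lambda>y. y i) \<in> measurable (PiM K (\<lambda>_. AM mu1)) (AM mu1)"
    by (rule measurable_component_singleton[OF assms])
  moreover have "h \<in> borel_measurable (AM mu1)"
  proof -
    have "h \<in> borel_measurable (count_space UNIV)" by simp
    moreover have "measurable (AM mu1) (borel :: real measure) = measurable (count_space UNIV) borel"
      by (rule measurable_cong_sets) auto
    ultimately show ?thesis by simp
  qed
  ultimately show ?thesis by (rule measurable_compose)
qed

lemma QL_cong:
  assumes "\<And>l. l \<in> {1..L} \<Longrightarrow> a l = a' l" "\<And>l. l \<in> {1..L} \<Longrightarrow> b l = b' l"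
  shows "QL q L a b = QL q L a' b'"
  unfolding QL_def using assms by (intro prod.cong) auto

lemma QL_01:
  assumes Hq: "\<forall>a\<in>{0,1}. \<forall>b\<in>{0,1}. 0 < q a b \<and> q a b < (1::real)"
    and "\<And>l. l \<in> {1..L} \<Longrightarrow> a l \<in> {0,1}" "\<And>l. l \<in> {1..L} \<Longrightarrow> b l \<in> {0,1}"
  shows "0 \<le> QL q L a b \<and> QL q L a b \<le> 1"
proof -
  have "0 \<le> q (a l) (b l) \<and> q (a l) (b l) \<le> 1" if "l \<in> {1..L}" for l
    using Hq assms(2,3)[OF that] by (auto simp: less_imp_le)
  then show ?thesis unfolding QL_def by (auto intro!: prod_nonneg prod_le_1)
qed

lemma meas_QLx:
  fixes n L :: nat
  assumes "v \<in> {1..n}"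
  shows "(\<lambda>a. QL q L x (\<lambda>l. a (v,l))) \<in> borel_measurable (PiM ({1..n}\<times>{1..L}) (\<lambda>_. AM mu1))"
  unfolding QL_def
  by (rule borel_measurable_prod, rule meas_coord[where h="\<lambda>y. q (x _) y"]) (use assms in auto)

lemma int_QL:
  fixes n L :: nat
  assumes "0 \<le> mu1" "mu1 \<le> 1" "v \<in> {1..n}"
  shows "(\<integral>a. QL q L x (\<lambda>l. a (v,l)) \<partial>PiM ({1..n}\<times>{1..L}) (\<lambda>_. AM mu1)) =
     (\<Prod>l\<in>{1..L}. Gamma_MAG (1-mu1) mu1 q (x l))"
proof -
  have "(\<integral>a. QL q L x (\<lambda>l. a (v,l)) \<partial>PiM ({1..n}\<times>{1..L}) (\<lambda>_. AM mu1)) =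
     (\<Prod>l\<in>{1..L}. \<integral>y. q (x l) y \<partial>AM mu1)"
    unfolding QL_def
    by (rule prod_integral_coords[where M="\<lambda>_. AM mu1" and p="\<lambda>l. (v,l)" and g="\<lambda>l y. q (x l) y", OF AM_prob])
       (use assms in \<open>auto simp: inj_on_def AM_integrable intro!: finite_cartesian_product\<close>)
  also have "\<dots> = (\<Prod>l\<in>{1..L}. Gamma_MAG (1-mu1) mu1 q (x l))"
    using assms by (simp add: AM_integral Gamma_MAG_def)
  finally show ?thesis .
qed

lemma int_phiQ:
  fixes n L :: nat
  assumes Hq: "\<forall>a\<in>{0,1}. \<forall>b\<in>{0,1}. 0 < q a b \<and> q a b < (1::real)"
    and "0 \<le> mu1" "mu1 \<le> 1" and x: "\<And>l. l \<in> {1..L} \<Longrightarrow> x l \<in> {0,1}" and v: "v \<in> {1..n}"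
  shows "(\<integral>a. phi (QL q L x (\<lambda>l. a (v,l))) \<partial>PiM ({1..n}\<times>{1..L}) (\<lambda>_. AM mu1)) =
     1 - (\<Prod>l\<in>{1..L}. Gamma_MAG (1-mu1) mu1 q (x l))"
proof -
  let ?M = "PiM ({1..n}\<times>{1..L}) (\<lambda>_. AM mu1)"
  interpret PM: prob_space ?M by (intro prob_space_PiM AM_prob)
  have AEv: "AE a in ?M. \<forall>i\<in>{1..n}\<times>{1..L}. a i \<in> {0,1}" by (rule AE_valid) simp
  have mQ: "(\<lambda>a. QL q L x (\<lambda>l. a (v,l))) \<in> borel_measurable ?M" by (rule meas_QLx[OF v])
  have AEb: "AE a in ?M. 0 \<le> QL q L x (\<lambda>l. a (v,l)) \<and> QL q L x (\<lambda>l. a (v,l)) \<le> 1"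
    using AEv by eventually_elim (rule QL_01[OF Hq x], use v in auto)
  have "(\<integral>a. phi (QL q L x (\<lambda>l. a (v,l))) \<partial>?M) = (\<integral>a. 1 - QL q L x (\<lambda>l. a (v,l)) \<partial>?M)"
  proof (rule integral_cong_AE)
    show "(\<lambda>a. phi (QL q L x (\<lambda>l. a (v,l)))) \<in> borel_measurable ?M"
      by (rule measurable_compose[OF mQ meas_phi])
    show "(\<lambda>a. 1 - QL q L x (\<lambda>l. a (v,l))) \<in> borel_measurable ?M" using mQ by measurable
    show "AE a in ?M. phi (QL q L x (\<lambda>l. a (v,l))) = 1 - QL q L x (\<lambda>l. a (v,l))"
      using AEb by eventually_elim (auto simp: phi_eq)
  qed
  also have "\<dots> = 1 - (\<integral>a. QL q L x (\<lambda>l. a (v,l)) \<partial>?M)"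
  proof -
    have "integrable ?M (\<lambda>a. QL q L x (\<lambda>l. a (v,l)))"
      by (rule PM.integrable_const_bound[where B=1]) (use AEb mQ in \<open>auto elim: AE_mp\<close>)
    then have "(\<integral>a. 1 - QL q L x (\<lambda>l. a (v,l)) \<partial>?M) = (\<integral>a. 1 \<partial>?M) - (\<integral>a. QL q L x (\<lambda>l. a (v,l)) \<partial>?M)"
      by (rule Bochner_Integration.integral_diff[OF PM.integrable_const])
    moreover have "(\<integral>a. 1 \<partial>?M) = (1::real)"
      using PM.prob_space by (simp only: lebesgue_integral_const) simp
    ultimately show ?thesis by simp
  qed
  also have "\<dots> = 1 - (\<Prod>l\<in>{1..L}. Gamma_MAG (1-mu1) mu1 q (x l))"
    using int_QL[OF assms(2,3) v] by simp
  finally show ?thesis .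
qed

lemma prod01_bound: "\<bar>\<Prod>l\<in>S. if P l then 1 else (0::real)\<bar> \<le> 1"
  by (cases "finite S") (auto simp: prod_if01)

lemma block_x:
  fixes n L :: nat
  assumes Hq: "\<forall>a\<in>{0,1}. \<forall>b\<in>{0,1}. 0 < q a b \<and> q a b < (1::real)"
    and mu: "0 \<le> mu1" "mu1 \<le> 1" and u: "u \<in> {1..n}" and x: "\<And>l. l \<in> {1..L} \<Longrightarrow> x l \<in> {0,1}"
  shows "(\<integral>a. (\<Prod>l\<in>{1..L}. if a (u,l) = x l then 1 else 0) * (\<Prod>v\<in>{1..n}-{u}. phi (QL q L x (\<lambda>l. a (v,l))))
           \<partial>PiM ({1..n}\<times>{1..L}) (\<lambda>_. AM mu1))
       = (\<integral>a. (\<Prod>l\<in>{1..L}. if a (u,l) = x l then 1 else 0) \<partial>PiM ({1..n}\<times>{1..L}) (\<lambda>_. AM mu1))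
         * (1 - (\<Prod>l\<in>{1..L}. Gamma_MAG (1-mu1) mu1 q (x l))) ^ (n - 1)"
proof -
  let ?M = "PiM ({1..n}\<times>{1..L}) (\<lambda>_. AM mu1)"
  define K where "K w = {w}\<times>{1..L}" for w :: nat
  define g where "g w y = (if w = u then (\<Prod>l\<in>{1..L}. if y (u,l) = x l then 1 else 0)
       else phi (QL q L x (\<lambda>l. y (w,l))))" for w and y :: "nat \<times> nat \<Rightarrow> nat"
  have gr: "g w (restrict a (K w)) = (if w = u then (\<Prod>l\<in>{1..L}. if a (u,l) = x l then 1 else 0)
       else phi (QL q L x (\<lambda>l. a (w,l))))" for w a
  proof (cases "w = u")
    case True
    then show ?thesis unfolding g_def by (auto simp: K_def intro!: prod.cong)
  next
    case False
    have "QL q L x (\<lambda>l. restrict a (K w) (w,l)) = QL q L x (\<lambda>l. a (w,l))"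
      by (rule QL_cong) (auto simp: K_def)
    then show ?thesis unfolding g_def using False by simp
  qed
  have main: "(\<integral>a. (\<Prod>w\<in>{1..n}. g w (restrict a (K w))) \<partial>?M) = (\<Prod>w\<in>{1..n}. \<integral>a. g w (restrict a (K w)) \<partial>?M)"
  proof (rule block_integral[OF AM_prob])
    show "finite ({1..n}\<times>{1..L})" by simp
    show "finite {1..n}" by simp
    show "K j \<subseteq> {1..n}\<times>{1..L}" if "j \<in> {1..n}" for j using that by (auto simp: K_def)
    show "disjoint_family_on K {1..n}" by (auto simp: disjoint_family_on_def K_def)
    show "\<bar>g j y\<bar> \<le> 1" for j y
      by (auto simp: g_def phi_bound prod01_bound)
    fix j assume j: "j \<in> {1..n}"
    show "g j \<in> borel_measurable (PiM (K j) (\<lambda>_. AM mu1))"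
    proof (cases "j = u")
      case True
      have "(\<lambda>y. \<Prod>l\<in>{1..L}. if y (u,l) = x l then 1 else (0::real)) \<in> borel_measurable (PiM (K j) (\<lambda>_. AM mu1))"
        by (rule borel_measurable_prod, rule meas_coord[where h="\<lambda>z. if z = x _ then 1 else 0"]) (use True in \<open>auto simp: K_def\<close>)
      then show ?thesis using True by (simp add: g_def[abs_def])
    next
      case False
      have "(\<lambda>y. QL q L x (\<lambda>l. y (j,l))) \<in> borel_measurable (PiM (K j) (\<lambda>_. AM mu1))"
        unfolding QL_def
        by (rule borel_measurable_prod, rule meas_coord[where h="\<lambda>y. q (x _) y"]) (auto simp: K_def)
      then have "(\<lambda>y. phi (QL q L x (\<lambda>l. y (j,l)))) \<in> borel_measurable (PiM (K j) (\<lambda>_. AM mu1))"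
        by (rule measurable_compose[OF _ meas_phi])
      then show ?thesis using False by (simp add: g_def[abs_def])
    qed
  qed
  have lhs: "(\<Prod>w\<in>{1..n}. g w (restrict a (K w))) =
     (\<Prod>l\<in>{1..L}. if a (u,l) = x l then 1 else 0) * (\<Prod>v\<in>{1..n}-{u}. phi (QL q L x (\<lambda>l. a (v,l))))" for a
    unfolding gr using u by (subst prod.remove[of _ u]) (auto intro!: prod.cong)
  have rhs: "(\<Prod>w\<in>{1..n}. \<integral>a. g w (restrict a (K w)) \<partial>?M) =
     (\<integral>a. (\<Prod>l\<in>{1..L}. if a (u,l) = x l then 1 else 0) \<partial>?M) * (\<Prod>v\<in>{1..n}-{u}. \<integral>a. phi (QL q L x (\<lambda>l. a (v,l))) \<partial>?M)"
    unfolding gr using u by (subst prod.remove[of _ u]) (auto intro!: prod.cong)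
  have "(\<Prod>v\<in>{1..n}-{u}. \<integral>a. phi (QL q L x (\<lambda>l. a (v,l))) \<partial>?M) =
      (\<Prod>v\<in>{1..n}-{u}. 1 - (\<Prod>l\<in>{1..L}. Gamma_MAG (1-mu1) mu1 q (x l)))"
    by (rule prod.cong[OF refl], rule int_phiQ[OF Hq mu x]) auto
  also have "\<dots> = (1 - (\<Prod>l\<in>{1..L}. Gamma_MAG (1-mu1) mu1 q (x l))) ^ (n - 1)"
    using u by simp
  finally show ?thesis using main lhs rhs by simp
qed

lemma meas_coord2:
  assumes "i \<in> K" "j \<in> K"
  shows "(\<lambda>y. h (y i) (y j) :: real) \<in> borel_measurable (PiM K (\<lambda>_. AM mu1))"
proof -
  have ci: "(\<lambda>y. y i) \<in> measurable (PiM K (\<lambda>_. AM mu1)) (count_space UNIV)"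
    using measurable_component_singleton[OF assms(1), of "\<lambda>_. AM mu1"]
    by (simp add: measurable_cong_sets[OF refl, of "AM mu1" "count_space UNIV"])
  show ?thesis
  proof (rule measurable_compose_countable'[where f="\<lambda>z y. h z (y j)" and g="\<lambda>y. y i" and I=UNIV])
    fix z :: nat
    show "(\<lambda>y. h z (y j)) \<in> borel_measurable (PiM K (\<lambda>_. AM mu1))"
      by (rule meas_coord[OF assms(2)])
  qed (use ci in auto)
qed

lemma meas_Gx:
  fixes n L :: nat
  assumes "u \<in> {1..n}"
  shows "(\<lambda>a. \<Prod>l\<in>{1..L}. if a (u,l) = x l then 1 else (0::real)) \<in> borel_measurable (PiM ({1..n}\<times>{1..L}) (\<lambda>_. AM mu1))"
  by (rule borel_measurable_prod, rule meas_coord[where h="\<lambda>z. if z = x _ then 1 else 0"]) (use assms in auto)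

lemma meas_Fx:
  fixes n L :: nat
  shows "(\<lambda>a. \<Prod>v\<in>{1..n}-{u}. phi (QL q L x (\<lambda>l. a (v,l)))) \<in> borel_measurable (PiM ({1..n}\<times>{1..L}) (\<lambda>_. AM mu1))"
  by (rule borel_measurable_prod, rule measurable_compose[OF meas_QLx meas_phi]) auto

lemma meas_F:
  fixes n L :: nat
  assumes "u \<in> {1..n}"
  shows "(\<lambda>a. \<Prod>v\<in>{1..n}-{u}. phi (QL q L (\<lambda>l. a (u,l)) (\<lambda>l. a (v,l)))) \<in> borel_measurable (PiM ({1..n}\<times>{1..L}) (\<lambda>_. AM mu1))"
proof (rule borel_measurable_prod, rule measurable_compose[OF _ meas_phi])
  fix v assume v: "v \<in> {1..n}-{u}"
  show "(\<lambda>a. QL q L (\<lambda>l. a (u,l)) (\<lambda>l. a (v,l))) \<in> borel_measurable (PiM ({1..n}\<times>{1..L}) (\<lambda>_. AM mu1))"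
    unfolding QL_def
    by (rule borel_measurable_prod, rule meas_coord2[where h=q]) (use assms v in auto)
qed

lemma Gamma_bounds:
  assumes Hq: "\<forall>a\<in>{0,1}. \<forall>b\<in>{0,1}. 0 < q a b \<and> q a b < (1::real)"
    and mu: "0 \<le> mu1" "mu1 \<le> 1" and b: "b \<in> {0,1}"
  shows "0 \<le> Gamma_MAG (1-mu1) mu1 q b \<and> Gamma_MAG (1-mu1) mu1 q b \<le> 1"
proof -
  have "0 < q b 0" "q b 0 < 1" "0 < q b 1" "q b 1 < 1" using Hq b by auto
  moreover have "(1-mu1) * q b 0 \<le> (1-mu1) * 1" "mu1 * q b 1 \<le> mu1 * 1"
    using calculation mu by (intro mult_left_mono; simp)+
  ultimately show ?thesis using mu unfolding Gamma_MAG_def by (auto intro!: add_nonneg_nonneg mult_nonneg_nonneg)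
qed

lemma sum_G_le1:
  fixes L :: nat
  shows "(\<Sum>x\<in>PiE {1..L} (\<lambda>_. {0,1::nat}). \<Prod>l\<in>{1..L}. if a (u,l) = x l then 1 else (0::real)) \<le> 1"
proof -
  let ?X = "PiE {1..L} (\<lambda>_. {0,1::nat})"
  let ?r = "restrict (\<lambda>l. a (u,l)) {1..L}"
  have "(\<Sum>x\<in>?X. \<Prod>l\<in>{1..L}. if a (u,l) = x l then 1 else (0::real)) =
        (\<Sum>x\<in>?X. if x = ?r then 1 else 0)"
  proof (rule sum.cong[OF refl])
    fix x assume x: "x \<in> ?X"
    have "(\<forall>l\<in>{1..L}. a (u,l) = x l) \<longleftrightarrow> x = ?r"
      using x by (auto simp: PiE_def extensional_def fun_eq_iff)
    moreover have "(\<Prod>l\<in>{1..L}. if a (u,l) = x l then 1 else (0::real)) = (if \<forall>l\<in>{1..L}. a (u,l) = x l then 1 else 0)"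
      by (rule prod_if01) simp
    ultimately show "(\<Prod>l\<in>{1..L}. if a (u,l) = x l then 1 else (0::real)) = (if x = ?r then 1 else 0)"
      by simp
  qed
  also have "\<dots> \<le> 1" by (subst sum.delta) (auto simp: finite_PiE)
  finally show ?thesis .
qed

lemma iso_bounds:
  fixes n L :: nat
  assumes Hq: "\<forall>a\<in>{0,1}. \<forall>b\<in>{0,1}. 0 < q a b \<and> q a b < (1::real)"
    and mu: "0 \<le> mu1" "mu1 \<le> 1"
    and G01: "Gamma_MAG (1-mu1) mu1 q 0 \<le> Gamma_MAG (1-mu1) mu1 q 1"
    and u: "u \<in> {1..n}"
  shows "(1-mu1)^L * (1 - Gamma_MAG (1-mu1) mu1 q 0 ^ L)^(n-1) \<le> measure (MAG_space mu1 n L) (iso_set q n L mu1 u)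
       \<and> measure (MAG_space mu1 n L) (iso_set q n L mu1 u) \<le> (1 - Gamma_MAG (1-mu1) mu1 q 0 ^ L)^(n-1)"
proof -
  let ?M = "PiM ({1..n}\<times>{1..L}) (\<lambda>_. AM mu1)"
  interpret PM: prob_space ?M by (intro prob_space_PiM AM_prob)
  let ?G = "Gamma_MAG (1-mu1) mu1 q"
  let ?g0 = "?G 0"
  let ?X = "PiE {1..L} (\<lambda>_. {0,1::nat})"
  define G where "G x a = (\<Prod>l\<in>{1..L}. if a (u,l) = x l then 1 else (0::real))" for x :: "nat \<Rightarrow> nat" and a :: "nat \<times> nat \<Rightarrow> nat"
  define Fx where "Fx x a = (\<Prod>v\<in>{1..n}-{u}. phi (QL q L x (\<lambda>l. a (v,l))))" for x a
  define F where "F a = (\<Prod>v\<in>{1..n}-{u}. phi (QL q L (\<lambda>l. a (u,l)) (\<lambda>l. a (v,l))))" for a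
  define P where "P x = (\<integral>a. G x a \<partial>?M)" for x
  define c where "c x = 1 - (\<Prod>l\<in>{1..L}. ?G (x l))" for x
  have finX: "finite ?X" by (simp add: finite_PiE)
  have Gbnd: "\<bar>G x a\<bar> \<le> 1" for x a unfolding G_def by (rule prod01_bound)
  have Fxbnd: "\<bar>Fx x a\<bar> \<le> 1" for x a unfolding Fx_def
    by (simp add: abs_prod, rule prod_le_1) (auto simp: phi_bound)
  have mG: "G x \<in> borel_measurable ?M" for x unfolding G_def[abs_def] by (rule meas_Gx[OF u])
  have mFx: "Fx x \<in> borel_measurable ?M" for x unfolding Fx_def[abs_def] by (rule meas_Fx)
  have mF: "F \<in> borel_measurable ?M" unfolding F_def[abs_def] by (rule meas_F[OF u])
  have intGF: "integrable ?M (\<lambda>a. G x a * Fx x a)" for x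
    by (rule PM.integrable_const_bound[where B=1])
       (use Gbnd Fxbnd mG mFx in \<open>auto simp: abs_mult intro!: mult_le_one\<close>)
  have intG: "integrable ?M (G x)" for x
    by (rule PM.integrable_const_bound[where B=1]) (use Gbnd mG in auto)
  have Pnn: "0 \<le> P x" for x unfolding P_def G_def by (rule integral_nonneg_AE) (auto intro!: prod_nonneg)
  have AEv: "AE a in ?M. \<forall>i\<in>{1..n}\<times>{1..L}. a i \<in> {0,1}" by (rule AE_valid) simp
  have AEdec: "AE a in ?M. F a = (\<Sum>x\<in>?X. G x a * Fx x a)"
    using AEv
  proof eventually_elim
    case (elim a)
    let ?r = "restrict (\<lambda>l. a (u,l)) {1..L}"
    have rX: "?r \<in> ?X" using elim u by auto
    have "(\<Sum>x\<in>?X. G x a * Fx x a) = (\<Sum>x\<in>?X. if x = ?r then Fx x a else 0)"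
    proof (rule sum.cong[OF refl])
      fix x assume x: "x \<in> ?X"
      have "(\<forall>l\<in>{1..L}. a (u,l) = x l) \<longleftrightarrow> x = ?r"
        using x by (auto simp: PiE_def extensional_def fun_eq_iff)
      then show "G x a * Fx x a = (if x = ?r then Fx x a else 0)"
        using prod_if01[of "{1..L}" "\<lambda>l. a (u,l) = x l"] by (simp add: G_def)
    qed
    also have "\<dots> = Fx ?r a" using rX by (simp add: finite_PiE)
    also have "\<dots> = F a" unfolding Fx_def F_def
      by (intro prod.cong refl arg_cong[where f=phi] QL_cong) auto
    finally show ?case by simp
  qed
  have eq: "measure (MAG_space mu1 n L) (iso_set q n L mu1 u) = (\<Sum>x\<in>?X. P x * c x ^ (n-1))"
  proof -
    have "measure (MAG_space mu1 n L) (iso_set q n L mu1 u) = (\<integral>a. F a \<partial>?M)"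
      unfolding F_def by (rule iso_fubini[OF u])
    also have "\<dots> = (\<integral>a. (\<Sum>x\<in>?X. G x a * Fx x a) \<partial>?M)"
      by (rule integral_cong_AE[OF mF _ AEdec]) (use mG mFx in measurable)
    also have "\<dots> = (\<Sum>x\<in>?X. \<integral>a. G x a * Fx x a \<partial>?M)"
      by (rule Bochner_Integration.integral_sum) (rule intGF)
    also have "\<dots> = (\<Sum>x\<in>?X. P x * c x ^ (n-1))"
    proof (rule sum.cong[OF refl])
      fix x assume x: "x \<in> ?X"
      show "(\<integral>a. G x a * Fx x a \<partial>?M) = P x * c x ^ (n-1)"
        unfolding G_def Fx_def P_def c_def
        by (rule block_x[OF Hq mu u]) (use x in auto)
    qed
    finally show ?thesis .
  qed
  have Gx: "?g0 \<le> ?G b \<and> ?G b \<le> 1" if "b \<in> {0,1}" for b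
    using that G01 Gamma_bounds[OF Hq mu that] by auto
  have g0nn: "0 \<le> ?g0" using Gamma_bounds[OF Hq mu] by auto
  have cx: "0 \<le> c x \<and> c x \<le> 1 - ?g0 ^ L" if x: "x \<in> ?X" for x
  proof -
    have "(\<Prod>l\<in>{1..L}. ?G (x l)) \<le> 1"
      by (rule prod_le_1) (use x Gx g0nn in \<open>auto simp: PiE_def Pi_def intro: order_trans\<close>)
    moreover have "?g0 ^ L \<le> (\<Prod>l\<in>{1..L}. ?G (x l))"
    proof -
      have "?g0 ^ L = (\<Prod>l\<in>{1..L}. ?g0)" by simp
      also have "\<dots> \<le> (\<Prod>l\<in>{1..L}. ?G (x l))"
        by (rule prod_mono) (use x Gx g0nn in \<open>auto simp: PiE_def Pi_def\<close>)
      finally show ?thesis .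
    qed
    ultimately show ?thesis unfolding c_def by simp
  qed
  have sumP: "(\<Sum>x\<in>?X. P x) \<le> 1"
  proof -
    have "(\<Sum>x\<in>?X. P x) = (\<integral>a. (\<Sum>x\<in>?X. G x a) \<partial>?M)"
      unfolding P_def by (rule Bochner_Integration.integral_sum[symmetric]) (rule intG)
    also have "\<dots> \<le> (\<integral>a. 1 \<partial>?M)"
    proof (rule integral_mono)
      show "integrable ?M (\<lambda>a. \<Sum>x\<in>?X. G x a)" by (rule Bochner_Integration.integrable_sum) (rule intG)
      show "integrable ?M (\<lambda>a. 1::real)" by (rule PM.integrable_const)
      fix a show "(\<Sum>x\<in>?X. G x a) \<le> 1" unfolding G_def by (rule sum_G_le1)
    qed
    also have "\<dots> = 1" using PM.prob_space by (simp only: lebesgue_integral_const) simp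
    finally show ?thesis .
  qed
  have upper: "(\<Sum>x\<in>?X. P x * c x ^ (n-1)) \<le> (1 - ?g0 ^ L)^(n-1)"
  proof -
    have "(\<Sum>x\<in>?X. P x * c x ^ (n-1)) \<le> (\<Sum>x\<in>?X. P x * (1 - ?g0 ^ L)^(n-1))"
      by (rule sum_mono, rule mult_left_mono[OF power_mono]) (use cx Pnn in auto)
    also have "\<dots> = (\<Sum>x\<in>?X. P x) * (1 - ?g0 ^ L)^(n-1)" by (simp add: sum_distrib_right)
    also have "\<dots> \<le> 1 * (1 - ?g0 ^ L)^(n-1)"
      by (rule mult_right_mono[OF sumP]) (use cx[of "restrict (\<lambda>_. 0) {1..L}"] in auto)
    finally show ?thesis by simp
  qed
  define x0 where "x0 = restrict (\<lambda>_. 0::nat) {1..L}"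
  have x0X: "x0 \<in> ?X" by (auto simp: x0_def)
  have Px0: "P x0 = (1-mu1)^L"
  proof -
    have "P x0 = (\<integral>a. (\<Prod>l\<in>{1..L}. (\<lambda>y. if y = 0 then 1 else (0::real)) (a (u,l))) \<partial>?M)"
      unfolding P_def G_def x0_def by (intro Bochner_Integration.integral_cong refl prod.cong) auto
    also have "\<dots> = (\<Prod>l\<in>{1..L}. \<integral>y. (if y = 0 then 1 else (0::real)) \<partial>AM mu1)"
      by (rule prod_integral_coords[where M="\<lambda>_. AM mu1" and p="\<lambda>l. (u,l)" and g="\<lambda>l y. if y = 0 then 1 else (0::real)", OF AM_prob])
         (use u in \<open>auto simp: inj_on_def AM_integrable\<close>)
    also have "\<dots> = (1-mu1)^L" using mu by (simp add: AM_integral)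
    finally show ?thesis .
  qed
  have cx0: "c x0 = 1 - ?g0 ^ L" unfolding c_def x0_def by simp
  have lower: "(1-mu1)^L * (1 - ?g0 ^ L)^(n-1) \<le> (\<Sum>x\<in>?X. P x * c x ^ (n-1))"
  proof -
    have "(1-mu1)^L * (1 - ?g0 ^ L)^(n-1) = P x0 * c x0 ^ (n-1)" using Px0 cx0 by simp
    also have "\<dots> \<le> (\<Sum>x\<in>?X. P x * c x ^ (n-1))"
      by (rule member_le_sum[OF x0X]) (use cx Pnn finX in auto)
    finally show ?thesis .
  qed
  show ?thesis using eq upper lower by simp
qed

lemma pw_eq:
  assumes n: "n \<ge> 2" and x: "0 < x"
  shows "real n * x ^ k = real n powr (1 + real k / ln (real n) * ln x)"
proof -
  have ln: "ln (real n) > 0" using n by simp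
  have "real n powr (1 + real k / ln (real n) * ln x) = exp ((1 + real k / ln (real n) * ln x) * ln (real n))"
    using n by (simp add: powr_def)
  also have "(1 + real k / ln (real n) * ln x) * ln (real n) = ln (real n) + real k * ln x"
    using ln by (simp add: field_simps)
  also have "exp (ln (real n) + real k * ln x) = real n * x ^ k"
    using n x by (simp add: exp_add exp_of_nat_mult)
  finally show ?thesis by simp
qed

lemma pow_exp_bound:
  assumes "0 \<le> t" "t \<le> 1"
  shows "(1 - t) ^ k \<le> exp (- (real k * t))"
proof -
  have "(1 - t) ^ k \<le> exp (- t) ^ k"
    by (rule power_mono) (use assms exp_ge_add_one_self[of "-t"] in auto)
  also have "\<dots> = exp (- (real k * t))" by (simp add: exp_of_nat_mult[symmetric])
  finally show ?thesis .
qed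

lemma asym_core:
  fixes L :: "nat \<Rightarrow> nat" and E :: "nat \<Rightarrow> real"
  assumes g: "0 < g" "g < 1" and m: "0 < m" "m \<le> 1"
    and Lr: "(\<lambda>n. real (L n) / ln (real n)) \<longlonglongrightarrow> \<rho>"
    and lo: "\<And>n. real n * m ^ (L n) * (1 - g ^ (L n)) ^ (n - 1) \<le> E n"
    and up: "\<And>n. E n \<le> real n * (1 - g ^ (L n)) ^ (n - 1)"
    and hm: "1 + \<rho> * ln m > 0"
  shows "(1 + \<rho> * ln g < 0 \<longrightarrow> filterlim E at_top sequentially) \<and> (1 + \<rho> * ln g > 0 \<longrightarrow> E \<longlonglongrightarrow> 0)"
proof (intro conjI impI)
  define r where "r n = real (L n) / ln (real n)" for n
  have gL: "0 \<le> g ^ k \<and> g ^ k \<le> 1" for k using g by (simp add: power_le_one)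
  have ev2: "eventually (\<lambda>n. n \<ge> (2::nat)) sequentially" by (rule eventually_ge_at_top)
  {
    assume A: "1 + \<rho> * ln g > 0"
    define c where "c = (1 + \<rho> * ln g) / 2"
    have c: "c > 0" using A by (simp add: c_def)
    have "(\<lambda>n. 1 + r n * ln g) \<longlonglongrightarrow> 1 + \<rho> * ln g"
      unfolding r_def by (intro tendsto_intros Lr)
    then have evc: "eventually (\<lambda>n. 1 + r n * ln g > c) sequentially"
      by (rule order_tendstoD) (use A in \<open>simp add: c_def\<close>)
    have lim0: "(\<lambda>n. real n * exp (- (real n powr c) / 2)) \<longlonglongrightarrow> 0"
      using c by real_asymp
    show "E \<longlonglongrightarrow> 0"
    proof (rule tendsto_sandwich[OF _ _ tendsto_const lim0])
      show "eventually (\<lambda>n. 0 \<le> E n) sequentially"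
      proof (rule always_eventually, rule allI)
        fix n
        have "0 \<le> real n * m ^ (L n) * (1 - g ^ (L n)) ^ (n - 1)"
          using m gL by (intro mult_nonneg_nonneg zero_le_power) auto
        then show "0 \<le> E n" using lo[of n] by linarith
      qed
      show "eventually (\<lambda>n. E n \<le> real n * exp (- (real n powr c) / 2)) sequentially"
        using evc ev2
      proof eventually_elim
        case (elim n)
        have t: "0 \<le> g ^ L n" "g ^ L n \<le> 1" using gL by auto
        have "real n powr c \<le> real n powr (1 + r n * ln g)"
          using elim by (intro powr_mono) auto
        also have "\<dots> = real n * g ^ L n" unfolding r_def using pw_eq[OF elim(2) g(1)] by simp
        finally have h1: "real n powr c \<le> real n * g ^ L n" .
        have hn: "real n / 2 \<le> real (n - 1)" using elim(2) by (simp add: of_nat_diff)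
        have "real n * g ^ L n / 2 = (real n / 2) * g ^ L n" by simp
        also have "\<dots> \<le> real (n - 1) * g ^ L n" by (rule mult_right_mono[OF hn t(1)])
        finally have "real n * g ^ L n / 2 \<le> real (n - 1) * g ^ L n" .
        with h1 have h2: "real n powr c / 2 \<le> real (n - 1) * g ^ L n" by simp
        have "E n \<le> real n * (1 - g ^ (L n)) ^ (n - 1)" by (rule up)
        also have "\<dots> \<le> real n * exp (- (real (n - 1) * g ^ L n))"
          by (rule mult_left_mono[OF pow_exp_bound[OF t]]) simp
        also have "\<dots> \<le> real n * exp (- (real n powr c) / 2)"
          using h2 by (intro mult_left_mono) auto
        finally show ?case .
      qed
    qed
  }
  {
    assume A: "1 + \<rho> * ln g < 0"
    define c where "c = - (1 + \<rho> * ln g) / 2"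
    define d where "d = (1 + \<rho> * ln m) / 2"
    have c: "c > 0" using A by (simp add: c_def)
    have d: "d > 0" using hm by (simp add: d_def)
    have "(\<lambda>n. 1 + r n * ln g) \<longlonglongrightarrow> 1 + \<rho> * ln g"
      unfolding r_def by (intro tendsto_intros Lr)
    then have evc: "eventually (\<lambda>n. 1 + r n * ln g < -c) sequentially"
      by (rule order_tendstoD) (use A in \<open>simp add: c_def field_simps\<close>)
    have "(\<lambda>n. 1 + r n * ln m) \<longlonglongrightarrow> 1 + \<rho> * ln m"
      unfolding r_def by (intro tendsto_intros Lr)
    then have evd: "eventually (\<lambda>n. 1 + r n * ln m > d) sequentially"
      by (rule order_tendstoD) (use hm in \<open>simp add: d_def\<close>)
    have lim1: "(\<lambda>n. real n powr (-c)) \<longlonglongrightarrow> 0"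
      using c by real_asymp
    then have evh: "eventually (\<lambda>n. real n powr (-c) < 1/2) sequentially"
      by (rule order_tendstoD) simp
    have lim2: "filterlim (\<lambda>n. real n powr d / 2) at_top sequentially"
      using d by real_asymp
    show "filterlim E at_top sequentially"
    proof (rule filterlim_at_top_mono[OF lim2])
      show "eventually (\<lambda>n. real n powr d / 2 \<le> E n) sequentially"
        using evc evd evh ev2
      proof eventually_elim
        case (elim n)
        have t: "0 \<le> g ^ L n" "g ^ L n \<le> 1" using gL by auto
        have "real n * g ^ L n = real n powr (1 + r n * ln g)"
          unfolding r_def using pw_eq[OF elim(4) g(1)] by simp
        also have "\<dots> \<le> real n powr (-c)"
          using elim by (intro powr_mono) auto
        finally have h1: "real n * g ^ L n \<le> 1/2" using elim(3) by simp
        have "real n powr d \<le> real n powr (1 + r n * ln m)"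
          using elim by (intro powr_mono) auto
        also have "\<dots> = real n * m ^ L n" unfolding r_def using pw_eq[OF elim(4) m(1)] by simp
        finally have h2: "real n powr d \<le> real n * m ^ L n" .
        have "1 - real n * g ^ L n \<le> 1 + real (n - 1) * (- (g ^ L n))"
          using t elim(4) by (simp add: of_nat_diff algebra_simps)
        also have "\<dots> \<le> (1 + (- (g ^ L n))) ^ (n - 1)"
          by (rule Bernoulli_inequality) (use t in auto)
        finally have h3: "1/2 \<le> (1 - g ^ L n) ^ (n - 1)" using h1 by simp
        have "real n powr d / 2 \<le> real n * m ^ L n * (1/2)" using h2 by simp
        also have "\<dots> \<le> real n * m ^ L n * (1 - g ^ L n) ^ (n - 1)"
          using h3 m by (intro mult_left_mono) auto
        also have "\<dots> \<le> E n" by (rule lo)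
        finally show ?case .
      qed
    qed
  }
qed

theorem proposition1:
  fixes mu0 mu1 \<rho> :: real and q :: "nat \<Rightarrow> nat \<Rightarrow> real" and L :: "nat \<Rightarrow> nat"
  assumes "0 < mu0" "mu0 < 1" "0 < mu1" "mu1 < 1" "mu0 + mu1 = 1"
    and "q 0 1 = q 1 0"
    and "\<forall>a\<in>{0,1}. \<forall>b\<in>{0,1}. 0 < q a b \<and> q a b < 1"
    and "\<rho> > 0"
    and "Gamma_MAG mu0 mu1 q 0 < Gamma_MAG mu0 mu1 q 1"
    and "1 + \<rho> * ln mu0 > 0"
    and "admissible \<rho> L"
  shows "(1 + \<rho> * ln (Gamma_MAG mu0 mu1 q 0) < 0 \<longrightarrow>
            filterlim (\<lambda>n. expected_isolated mu1 q n (L n)) at_top sequentially)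
       \<and> (1 + \<rho> * ln (Gamma_MAG mu0 mu1 q 0) > 0 \<longrightarrow>
            (\<lambda>n. expected_isolated mu1 q n (L n)) \<longlonglongrightarrow> 0)"
proof -
  have m0: "mu0 = 1 - mu1" using assms(5) by simp
  have Hq: "\<forall>a\<in>{0,1}. \<forall>b\<in>{0,1}. 0 < q a b \<and> q a b < (1::real)" using assms(7) by simp
  have mu: "0 \<le> mu1" "mu1 \<le> 1" using assms(3,4) by auto
  let ?g = "Gamma_MAG mu0 mu1 q 0"
  have G01: "Gamma_MAG (1-mu1) mu1 q 0 \<le> Gamma_MAG (1-mu1) mu1 q 1" using assms(9) m0 by simp
  have gpos: "0 < ?g"
    using Hq assms(1,3) unfolding Gamma_MAG_def by (auto intro!: add_pos_pos mult_pos_pos)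
  have glt1: "?g < 1"
  proof -
    have "mu0 * q 0 0 < mu0 * 1" "mu1 * q 0 1 < mu1 * 1"
      using Hq assms(1,3) by (intro mult_strict_left_mono; simp)+
    then show ?thesis using assms(5) unfolding Gamma_MAG_def by simp
  qed
  have Lr: "(\<lambda>n. real (L n) / ln (real n)) \<longlonglongrightarrow> \<rho>"
  proof -
    have eq1: "(\<lambda>n. real (L n)) \<sim>[sequentially] (\<lambda>n. \<rho> * ln (real n))"
      using assms(11) unfolding admissible_def by simp
    have "(\<lambda>n. if real (L n) = 0 \<and> \<rho> * ln (real n) = 0 then 1 else real (L n) / (\<rho> * ln (real n))) \<longlonglongrightarrow> 1"
      by (rule asymp_equivD[OF eq1])
    then have "(\<lambda>n. real (L n) / (\<rho> * ln (real n))) \<longlonglongrightarrow> 1"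
    proof (rule tendsto_cong[THEN iffD1, rotated])
      show "\<forall>\<^sub>F n in sequentially. (if real (L n) = 0 \<and> \<rho> * ln (real n) = 0 then 1 else real (L n) / (\<rho> * ln (real n))) =
          real (L n) / (\<rho> * ln (real n))"
        using eventually_ge_at_top[of "2::nat"] by eventually_elim (use assms(8) in auto)
    qed
    then have "(\<lambda>n. \<rho> * (real (L n) / (\<rho> * ln (real n)))) \<longlonglongrightarrow> \<rho> * 1"
      by (intro tendsto_mult tendsto_const)
    then show ?thesis using assms(8) by simp
  qed
  have up: "expected_isolated mu1 q n (L n) \<le> real n * (1 - ?g ^ (L n)) ^ (n - 1)" for n
  proof -
    have "expected_isolated mu1 q n (L n) = (\<Sum>u\<in>{1..n}. measure (MAG_space mu1 n (L n)) (iso_set q n (L n) mu1 u))"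
      by (rule E_sum)
    also have "\<dots> \<le> (\<Sum>u\<in>{1..n}. (1 - ?g ^ (L n)) ^ (n - 1))"
      by (rule sum_mono) (use iso_bounds[OF Hq mu G01] m0 in simp)
    also have "\<dots> = real n * (1 - ?g ^ (L n)) ^ (n - 1)" by simp
    finally show ?thesis .
  qed
  have lo: "real n * mu0 ^ (L n) * (1 - ?g ^ (L n)) ^ (n - 1) \<le> expected_isolated mu1 q n (L n)" for n
  proof -
    have "real n * mu0 ^ (L n) * (1 - ?g ^ (L n)) ^ (n - 1) = (\<Sum>u\<in>{1..n}. mu0 ^ (L n) * (1 - ?g ^ (L n)) ^ (n - 1))"
      by simp
    also have "\<dots> \<le> (\<Sum>u\<in>{1..n}. measure (MAG_space mu1 n (L n)) (iso_set q n (L n) mu1 u))"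
      by (rule sum_mono) (use iso_bounds[OF Hq mu G01] m0 in simp)
    also have "\<dots> = expected_isolated mu1 q n (L n)"
      by (rule E_sum[symmetric])
    finally show ?thesis .
  qed
  show ?thesis
    by (rule asym_core[OF gpos glt1 assms(1) _ Lr lo up assms(10)]) (use assms(2) in simp)
qed

end
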